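(* Let $\ell\ge1$ be an integer and $x$ a real number with $x\ge16\ell^{3/2}$. Then $$\sum_{\substack{\sigma\in S_\ell\\ \sigma\text{ has no fixed points}}}x^{|\mathsf{cyc}(\sigma)|}\le e^{\ell^{3/4}}\,\ell!!\,x^{\ell/2}.$$ Consequently also $\sum_{\pi}x^{|\pi|}\le e^{\ell^{3/4}}\,\ell!!\,x^{\ell/2}$, the sum over partitions $\pi$ of $\{1,\dots,\ell\}$ all of whose blocks have size at least $2$.
   Context: $S_\ell$ is the symmetric group on $\{1,\dots,\ell\}$ and $\mathsf{cyc}(\sigma)$ is its set of cycles; $|\pi|$ is the number of blocks of a partition. $n!!=n(n-2)(n-4)\cdots$ (ending at 1 or 2), with $0!!=1$. *)

theory Defs
  imports Complex_Main "HOL-Combinatorics.Combinatorics" "HOL-Library.Disjoint_Sets"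
begin

fun dfact :: "nat \<Rightarrow> nat" where
  "dfact 0 = 1"
| "dfact (Suc 0) = 1"
| "dfact (Suc (Suc n)) = Suc (Suc n) * dfact n"

definition cycs :: "nat \<Rightarrow> (nat \<Rightarrow> nat) \<Rightarrow> nat set set" where
  "cycs l \<sigma> = (\<lambda>i. orbit \<sigma> i) ` {1..l}"

end

theory Submission
  imports Defs
begin


lemma orbit_eq_of_mem:
  assumes "permutation s" "y \<in> orbit s x" shows "orbit s y = orbit s x"
  using assms cyclic_on_orbit' orbit_cyclic_eq3 by metis

lemma case2_orbit:
  assumes perm: "s permutes A" and fin: "finite A" and vA: "v \<in> A" and jA: "j \<in> A"
    and sj: "s j = v" and sv: "s v \<noteq> v" and iv: "i \<noteq> v"
  shows "orbit (s \<circ> Transposition.transpose v j) i = orbit s i - {v}"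
proof -
  define s' where "s' = s \<circ> Transposition.transpose v j"
  have jv: "j \<noteq> v" using sj sv by auto
  have inj: "inj s" using perm permutes_inj by blast
  have s'v: "s' v = v" using sj by (simp add: s'_def)
  have s'j: "s' j = s v" using jv by (simp add: s'_def)
  have s'o: "z \<noteq> v \<Longrightarrow> z \<noteq> j \<Longrightarrow> s' z = s z" for z by (simp add: s'_def)
  have ps': "s' permutes A" unfolding s'_def
    by (rule permutes_compose[OF permutes_swap_id[OF vA jA] perm])
  have pmt: "permutation s'" using ps' fin permutation_permutes by blast
  have pms: "permutation s" using perm fin permutation_permutes by blast
  have svj: "s z = v \<Longrightarrow> z = j" for z using inj sj by (metis injD)
  have sub: "y \<in> orbit s i \<and> y \<noteq> v" if "y \<in> orbit s' i" for y
  proof -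
    have key: "s' z \<in> orbit s i \<and> s' z \<noteq> v" if "z \<noteq> v" "z = i \<or> z \<in> orbit s i" for z
    proof (cases "z = j")
      case True
      have "s z \<in> orbit s i" using that(2) by (auto intro: orbit.intros)
      hence "s (s z) \<in> orbit s i" by (auto intro: orbit.intros)
      then show ?thesis using True s'j sj sv by simp
    next
      case False
      have "s z \<in> orbit s i" using that(2) by (auto intro: orbit.intros)
      moreover have "s z \<noteq> v" using svj False by blast
      ultimately show ?thesis using s'o[OF that(1) False] by simp
    qed
    from that show ?thesis
    proof induction
      case base then show ?case using key[of i] iv by simp
    next
      case (step y) then show ?case using key[of y] by simp
    qed
  qed
  have sup: "(y \<noteq> v \<longrightarrow> y \<in> orbit s' i) \<and> (y = v \<longrightarrow> j \<in> orbit s' i)" if "y \<in> orbit s i" for y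
  proof -
    define Q where "Q z \<longleftrightarrow> (z \<noteq> v \<longrightarrow> z \<in> orbit s' i) \<and> (z = v \<longrightarrow> j \<in> orbit s' i)" for z
    have Qi: "Q i" using iv permutation_self_in_orbit[OF pmt] by (simp add: Q_def)
    have stepQ: "Q (s z)" if "Q z" for z
    proof (cases "z = v")
      case True
      then have "j \<in> orbit s' i" using that by (simp add: Q_def)
      then have "s' j \<in> orbit s' i" by (rule orbit.step)
      then show ?thesis using True s'j sv by (simp add: Q_def)
    next
      case False
      then have zin: "z \<in> orbit s' i" using that by (simp add: Q_def)
      show ?thesis
      proof (cases "s z = v")
        case True
        then have "z = j" using svj by blast
        then show ?thesis using zin True by (simp add: Q_def)
      next
        case F2: False
        then have "z \<noteq> j" using sj by auto
        then have "s' z = s z" using s'o False by blast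
        moreover have "s' z \<in> orbit s' i" using zin by (rule orbit.step)
        ultimately show ?thesis using F2 by (simp add: Q_def)
      qed
    qed
    from that have "Q y"
    proof induction
      case base then show ?case using stepQ[OF Qi] by simp
    next
      case (step y) then show ?case using stepQ by simp
    qed
    then show ?thesis by (simp add: Q_def)
  qed
  show ?thesis unfolding s'_def[symmetric]
  proof (rule set_eqI, rule iffI)
    fix y assume "y \<in> orbit s' i" then show "y \<in> orbit s i - {v}" using sub by simp
  next
    fix y assume "y \<in> orbit s i - {v}" then show "y \<in> orbit s' i" using sup by simp
  qed
qed


lemma case1_avoid:
  assumes perm: "s permutes A" and sv: "s v = j" and sj: "s j = v"
    and i: "i \<noteq> v" "i \<noteq> j" and y: "y \<in> orbit s i"
  shows "y \<noteq> v \<and> y \<noteq> j"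
proof -
  have inj: "inj s" using perm permutes_inj by blast
  have st: "s z \<noteq> v \<and> s z \<noteq> j" if "z \<noteq> v" "z \<noteq> j" for z
  proof
    have "s z \<noteq> s j" using that(2) inj_eq[OF inj] by simp
    then show "s z \<noteq> v" using sj by simp
    have "s z \<noteq> s v" using that(1) inj_eq[OF inj] by simp
    then show "s z \<noteq> j" using sv by simp
  qed
  from y show ?thesis
  proof induction
    case base show ?case using st[OF i] .
  next
    case (step y) then show ?case using st by blast
  qed
qed

lemma case1_orbit:
  assumes perm: "s permutes A" and fin: "finite A" and sv: "s v = j" and sj: "s j = v"
    and i: "i \<noteq> v" "i \<noteq> j"
  shows "orbit (s \<circ> Transposition.transpose v j) i = orbit s i"
proof (rule orbit_cong)
  have "permutation s" using perm fin permutation_permutes by blast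
  then show "i \<in> orbit s i" by (rule permutation_self_in_orbit)
  fix z assume "z \<in> orbit s i"
  then have "z \<noteq> v \<and> z \<noteq> j" using case1_avoid[OF perm sv sj i] by blast
  then show "(s \<circ> Transposition.transpose v j) z = s z" by simp
qed



lemma cy_case1:
  assumes perm: "s permutes A" and fin: "finite A" and vA: "v \<in> A"
    and sv: "s v = j" and sj: "s j = v" and jv: "j \<noteq> v"
  shows "card ((\<lambda>i. orbit s i) ` A) = Suc (card ((\<lambda>i. orbit (s \<circ> Transposition.transpose v j) i) ` (A - {v,j})))"
proof -
  have pms: "permutation s" using perm fin permutation_permutes by blast
  have img: "(\<lambda>i. orbit (s \<circ> Transposition.transpose v j) i) ` (A - {v,j}) = (\<lambda>i. orbit s i) ` (A - {v,j})"
  proof (rule image_cong)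
    fix i assume "i \<in> A - {v,j}"
    then show "orbit (s \<circ> Transposition.transpose v j) i = orbit s i"
      using case1_orbit[OF perm fin sv sj, of i] by simp
  qed simp
  have oj: "orbit s j = orbit s v" using permutation_orbit_step[OF pms, of v] sv by simp
  have Aeq: "(\<lambda>i. orbit s i) ` A = insert (orbit s v) ((\<lambda>i. orbit s i) ` (A - {v,j}))"
  proof (rule set_eqI, rule iffI)
    fix X assume "X \<in> (\<lambda>i. orbit s i) ` A"
    then obtain i where i: "i \<in> A" "X = orbit s i" by blast
    show "X \<in> insert (orbit s v) ((\<lambda>i. orbit s i) ` (A - {v,j}))"
    proof (cases "i = v \<or> i = j")
      case True then show ?thesis using i oj by auto
    next
      case False then show ?thesis using i by auto
    qed
  next
    fix X assume "X \<in> insert (orbit s v) ((\<lambda>i. orbit s i) ` (A - {v,j}))"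
    then show "X \<in> (\<lambda>i. orbit s i) ` A" using vA by blast
  qed
  have notin: "orbit s v \<notin> (\<lambda>i. orbit s i) ` (A - {v,j})"
  proof
    assume "orbit s v \<in> (\<lambda>i. orbit s i) ` (A - {v,j})"
    then obtain i where i: "i \<in> A - {v,j}" "orbit s v = orbit s i" by blast
    have "v \<in> orbit s v" using permutation_self_in_orbit[OF pms] .
    then have "v \<in> orbit s i" using i by simp
    moreover have "i \<noteq> v" "i \<noteq> j" using i by auto
    ultimately show False using case1_avoid[OF perm sv sj, of i v] by simp
  qed
  show ?thesis unfolding img Aeq using notin fin by (simp add: card_insert_disjoint)
qed

lemma cy_case2:
  assumes perm: "s permutes A" and fin: "finite A" and vA: "v \<in> A" and jA: "j \<in> A"
    and sj: "s j = v" and svj: "s v \<noteq> j" and der: "\<forall>i\<in>A. s i \<noteq> i"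
  shows "card ((\<lambda>i. orbit s i) ` A) = card ((\<lambda>i. orbit (s \<circ> Transposition.transpose v j) i) ` (A - {v}))"
proof -
  have pms: "permutation s" using perm fin permutation_permutes by blast
  have sv: "s v \<noteq> v" using der vA by blast
  have img: "(\<lambda>i. orbit (s \<circ> Transposition.transpose v j) i) ` (A - {v}) = (\<lambda>i. orbit s i - {v}) ` (A - {v})"
  proof (rule image_cong)
    fix i assume "i \<in> A - {v}"
    then show "orbit (s \<circ> Transposition.transpose v j) i = orbit s i - {v}"
      using case2_orbit[OF perm fin vA jA sj sv, of i] by simp
  qed simp
  have svA: "s v \<in> A" using permutes_in_image[OF perm] vA by simp
  have ov: "orbit s (s v) = orbit s v" using permutation_orbit_step[OF pms, of v] by simp
  have img2: "(\<lambda>i. orbit s i - {v}) ` (A - {v}) = (\<lambda>X. X - {v}) ` ((\<lambda>i. orbit s i) ` A)"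
  proof (rule set_eqI, rule iffI)
    fix X assume "X \<in> (\<lambda>i. orbit s i - {v}) ` (A - {v})"
    then show "X \<in> (\<lambda>X. X - {v}) ` ((\<lambda>i. orbit s i) ` A)" by blast
  next
    fix X assume "X \<in> (\<lambda>X. X - {v}) ` ((\<lambda>i. orbit s i) ` A)"
    then obtain i where i: "i \<in> A" "X = orbit s i - {v}" by blast
    show "X \<in> (\<lambda>i. orbit s i - {v}) ` (A - {v})"
    proof (cases "i = v")
      case True
      then have "X = orbit s (s v) - {v}" using i ov by simp
      then show ?thesis using svA sv by blast
    next
      case False then show ?thesis using i by blast
    qed
  qed
  have inj: "inj_on (\<lambda>X. X - {v}) ((\<lambda>i. orbit s i) ` A)"
  proof (rule inj_onI)
    fix X1 X2 assume X1: "X1 \<in> (\<lambda>i. orbit s i) ` A" and X2: "X2 \<in> (\<lambda>i. orbit s i) ` A"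
      and eq: "X1 - {v} = X2 - {v}"
    obtain a where a: "a \<in> A" "X1 = orbit s a" using X1 by blast
    obtain b where b: "b \<in> A" "X2 = orbit s b" using X2 by blast
    have "\<exists>z. z \<in> X1 \<and> z \<noteq> v"
    proof (cases "a = v")
      case True
      then have "s v \<in> X1" using a by (simp add: orbit.base)
      then show ?thesis using sv by blast
    next
      case False
      then show ?thesis using a permutation_self_in_orbit[OF pms, of a] by blast
    qed
    then obtain z where z: "z \<in> X1" "z \<noteq> v" by blast
    then have z2: "z \<in> X2" using eq by blast
    have "orbit s z = X1" using orbit_eq_of_mem[OF pms, of z a] z a by simp
    moreover have "orbit s z = X2" using orbit_eq_of_mem[OF pms, of z b] z2 b by simp
    ultimately show "X1 = X2" by simp
  qed
  show ?thesis unfolding img img2 using card_image[OF inj] by simp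
qed



definition der :: "nat set \<Rightarrow> (nat \<Rightarrow> nat) set" where
  "der A = {s. s permutes A \<and> (\<forall>i\<in>A. s i \<noteq> i)}"
definition cyn :: "nat set \<Rightarrow> (nat \<Rightarrow> nat) \<Rightarrow> nat" where
  "cyn A s = card ((\<lambda>i. orbit s i) ` A)"
definition Dsum :: "real \<Rightarrow> nat set \<Rightarrow> real" where
  "Dsum x A = (\<Sum>s\<in>der A. x ^ cyn A s)"

lemma finite_der: "finite A \<Longrightarrow> finite (der A)"
  by (rule finite_subset[of _ "{s. s permutes A}"]) (auto simp: der_def finite_permutations)

lemma sum_inj_le:
  fixes u :: "'b \<Rightarrow> real"
  assumes "finite T" "inj_on g S" "g ` S \<subseteq> T" "\<And>t. t\<in>T \<Longrightarrow> 0 \<le> u t" "\<And>s. s\<in>S \<Longrightarrow> w s = u (g s)"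
  shows "sum w S \<le> sum u T"
proof -
  have "sum w S = sum (u \<circ> g) S" by (rule sum.cong) (auto simp: assms(5))
  also have "\<dots> = sum u (g ` S)" by (rule sum.reindex[symmetric]) (rule assms(2))
  also have "\<dots> \<le> sum u T" by (rule sum_mono2) (use assms in auto)
  finally show ?thesis .
qed

lemma Dsum_rec:
  assumes fin: "finite A" and vA: "v \<in> A" and x: "0 \<le> x"
  shows "Dsum x A \<le> (\<Sum>j\<in>A-{v}. Dsum x (A-{v}) + x * Dsum x (A-{v,j}))"
proof -
  define \<Phi> where "\<Phi> s = (inv s v, s \<circ> Transposition.transpose v (inv s v))" for s :: "nat \<Rightarrow> nat"
  define T1 where "T1 = {s\<in>der A. s v = inv s v}"
  define T2 where "T2 = {s\<in>der A. s v \<noteq> inv s v}"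
  have basic: "inv s v \<in> A \<and> s (inv s v) = v \<and> inv s v \<noteq> v \<and> s permutes A \<and> (\<forall>i\<in>A. s i \<noteq> i)"
    if "s \<in> der A" for s
  proof -
    have p: "s permutes A" and d: "\<forall>i\<in>A. s i \<noteq> i" using that by (auto simp: der_def)
    have "inv s permutes A" using permutes_inv[OF p] .
    then have "inv s v \<in> A" using permutes_in_image vA by metis
    moreover have "s (inv s v) = v" using permutes_inverses(1)[OF p] .
    moreover have "inv s v \<noteq> v" using d vA calculation(2) by metis
    ultimately show ?thesis using p d by simp
  qed
  have inj: "inj_on \<Phi> S" for S
  proof (rule inj_onI)
    fix s1 s2 assume "\<Phi> s1 = \<Phi> s2"
    then have e1: "inv s1 v = inv s2 v" and e2: "s1 \<circ> Transposition.transpose v (inv s1 v) = s2 \<circ> Transposition.transpose v (inv s2 v)"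
      by (auto simp: \<Phi>_def)
    define t where "t = Transposition.transpose v (inv s1 v)"
    have e3: "s1 \<circ> t = s2 \<circ> t" using e1 e2 by (simp add: t_def)
    have "s1 = s1 \<circ> (t \<circ> t)" by (simp add: t_def)
    also have "\<dots> = (s1 \<circ> t) \<circ> t" by (simp only: comp_assoc)
    also have "\<dots> = (s2 \<circ> t) \<circ> t" using e3 by simp
    also have "\<dots> = s2 \<circ> (t \<circ> t)" by (simp only: comp_assoc)
    also have "\<dots> = s2" by (simp add: t_def)
    finally show "s1 = s2" .
  qed
  have split: "Dsum x A = sum (\<lambda>s. x ^ cyn A s) T1 + sum (\<lambda>s. x ^ cyn A s) T2"
  proof -
    have "der A = T1 \<union> T2" "T1 \<inter> T2 = {}" by (auto simp: T1_def T2_def)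
    moreover have "finite T1" "finite T2" using finite_der[OF fin] by (auto simp: T1_def T2_def)
    ultimately show ?thesis unfolding Dsum_def by (simp add: sum.union_disjoint)
  qed
  have part1: "sum (\<lambda>s. x ^ cyn A s) T1 \<le> (\<Sum>j\<in>A-{v}. x * Dsum x (A-{v,j}))"
  proof -
    define u1 where "u1 = (\<lambda>(j, t). x * x ^ cyn (A - {v,j}) t)"
    have "sum (\<lambda>s. x ^ cyn A s) T1 \<le> sum u1 (Sigma (A-{v}) (\<lambda>j. der (A-{v,j})))"
    proof (rule sum_inj_le[OF _ inj])
      show "finite (Sigma (A-{v}) (\<lambda>j. der (A-{v,j})))"
        using fin finite_der by (intro finite_SigmaI) auto
      show "0 \<le> u1 t" for t using x by (auto simp: u1_def split: prod.splits)
      show "\<Phi> ` T1 \<subseteq> Sigma (A-{v}) (\<lambda>j. der (A-{v,j}))"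
      proof
        fix p assume "p \<in> \<Phi> ` T1"
        then obtain s where s: "s \<in> T1" "p = \<Phi> s" by blast
        define j where "j = inv s v"
        have b: "j \<in> A" "s j = v" "j \<noteq> v" "s permutes A" "\<forall>i\<in>A. s i \<noteq> i"
          using basic[of s] s by (auto simp: T1_def j_def)
        have sv: "s v = j" using s by (simp add: T1_def j_def)
        have ps: "(s \<circ> Transposition.transpose v j) permutes A"
          by (rule permutes_compose[OF permutes_swap_id[OF vA b(1)] b(4)])
        have ps2: "(s \<circ> Transposition.transpose v j) permutes (A - {v,j})"
        proof (rule permutes_superset[OF ps])
          fix z assume "z \<in> A - (A - {v,j})"
          then have "z = v \<or> z = j" by blast
          then show "(s \<circ> Transposition.transpose v j) z = z" using b sv by auto
        qed
        have "\<forall>i\<in>A-{v,j}. (s \<circ> Transposition.transpose v j) i \<noteq> i" using b by auto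
        then show "p \<in> Sigma (A-{v}) (\<lambda>j. der (A-{v,j}))"
          using s ps2 b by (auto simp: \<Phi>_def j_def[symmetric] der_def)
      qed
      fix s assume s: "s \<in> T1"
      define j where "j = inv s v"
      have b: "j \<in> A" "s j = v" "j \<noteq> v" "s permutes A" "\<forall>i\<in>A. s i \<noteq> i"
        using basic[of s] s by (auto simp: T1_def j_def)
      have sv: "s v = j" using s by (simp add: T1_def j_def)
      have "cyn A s = Suc (cyn (A - {v,j}) (s \<circ> Transposition.transpose v j))"
        unfolding cyn_def by (rule cy_case1[OF b(4) fin vA sv b(2) b(3)])
      then show "x ^ cyn A s = u1 (\<Phi> s)" by (simp add: u1_def \<Phi>_def j_def[symmetric])
    qed
    also have "\<dots> = (\<Sum>j\<in>A-{v}. \<Sum>t\<in>der (A-{v,j}). x * x ^ cyn (A - {v,j}) t)"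
      unfolding u1_def using fin finite_der by (subst sum.Sigma) auto
    also have "\<dots> = (\<Sum>j\<in>A-{v}. x * Dsum x (A-{v,j}))"
      by (simp add: Dsum_def sum_distrib_left)
    finally show ?thesis .
  qed
  have part2: "sum (\<lambda>s. x ^ cyn A s) T2 \<le> (\<Sum>j\<in>A-{v}. Dsum x (A-{v}))"
  proof -
    define u2 where "u2 = (\<lambda>(j::nat, t). x ^ cyn (A - {v}) t)"
    have "sum (\<lambda>s. x ^ cyn A s) T2 \<le> sum u2 (Sigma (A-{v}) (\<lambda>j. der (A-{v})))"
    proof (rule sum_inj_le[OF _ inj])
      show "finite (Sigma (A-{v}) (\<lambda>j. der (A-{v})))"
        using fin finite_der by (intro finite_SigmaI) auto
      show "0 \<le> u2 t" for t using x by (auto simp: u2_def split: prod.splits)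
      show "\<Phi> ` T2 \<subseteq> Sigma (A-{v}) (\<lambda>j. der (A-{v}))"
      proof
        fix p assume "p \<in> \<Phi> ` T2"
        then obtain s where s: "s \<in> T2" "p = \<Phi> s" by blast
        define j where "j = inv s v"
        have b: "j \<in> A" "s j = v" "j \<noteq> v" "s permutes A" "\<forall>i\<in>A. s i \<noteq> i"
          using basic[of s] s by (auto simp: T2_def j_def)
        have svj: "s v \<noteq> j" using s by (simp add: T2_def j_def)
        have ps: "(s \<circ> Transposition.transpose v j) permutes A"
          by (rule permutes_compose[OF permutes_swap_id[OF vA b(1)] b(4)])
        have ps2: "(s \<circ> Transposition.transpose v j) permutes (A - {v})"
        proof (rule permutes_superset[OF ps])
          fix z assume "z \<in> A - (A - {v})"
          then have "z = v" by blast
          then show "(s \<circ> Transposition.transpose v j) z = z" using b by auto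
        qed
        have "(s \<circ> Transposition.transpose v j) i \<noteq> i" if "i \<in> A-{v}" for i
        proof (cases "i = j")
          case True then show ?thesis using svj b by auto
        next
          case False then show ?thesis using b that by auto
        qed
        then show "p \<in> Sigma (A-{v}) (\<lambda>j. der (A-{v}))"
          using s ps2 b by (auto simp: \<Phi>_def j_def[symmetric] der_def)
      qed
      fix s assume s: "s \<in> T2"
      define j where "j = inv s v"
      have b: "j \<in> A" "s j = v" "j \<noteq> v" "s permutes A" "\<forall>i\<in>A. s i \<noteq> i"
        using basic[of s] s by (auto simp: T2_def j_def)
      have svj: "s v \<noteq> j" using s by (simp add: T2_def j_def)
      have "cyn A s = cyn (A - {v}) (s \<circ> Transposition.transpose v j)"
        unfolding cyn_def by (rule cy_case2[OF b(4) fin vA b(1) b(2) svj b(5)])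
      then show "x ^ cyn A s = u2 (\<Phi> s)" by (simp add: u2_def \<Phi>_def j_def[symmetric])
    qed
    also have "\<dots> = (\<Sum>j\<in>A-{v}. \<Sum>t\<in>der (A-{v}). x ^ cyn (A - {v}) t)"
      unfolding u2_def using fin finite_der by (subst sum.Sigma) auto
    also have "\<dots> = (\<Sum>j\<in>A-{v}. Dsum x (A-{v}))"
      by (simp add: Dsum_def)
    finally show ?thesis .
  qed
  show ?thesis using split part1 part2 by (simp add: sum.distrib)
qed



fun fr :: "real \<Rightarrow> nat \<Rightarrow> real" where
  "fr x 0 = 1"
| "fr x (Suc 0) = 0"
| "fr x (Suc (Suc n)) = real (Suc n) * (fr x (Suc n) + x * fr x n)"

lemma fr_nonneg: "0 \<le> x \<Longrightarrow> 0 \<le> fr x n"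
  by (induction x n rule: fr.induct) auto

lemma rec_bound:
  fixes W :: "nat set \<Rightarrow> real"
  assumes x: "0 \<le> x" and W0: "W {} \<le> 1" and W1: "\<And>a. W {a} \<le> 0"
    and rec: "\<And>A v. finite A \<Longrightarrow> v \<in> A \<Longrightarrow> W A \<le> (\<Sum>j\<in>A-{v}. W (A-{v}) + x * W (A-{v,j}))"
  shows "finite A \<Longrightarrow> W A \<le> fr x (card A)"
proof (induction "card A" arbitrary: A rule: less_induct)
  case less
  consider "card A = 0" | "card A = 1" | n where "card A = Suc (Suc n)"
    by (metis One_nat_def not0_implies_Suc)
  then show ?case
  proof cases
    case 1 then have "A = {}" using less.prems by simp
    then show ?thesis using W0 by simp
  next
    case 2 then obtain a where "A = {a}" by (metis card_1_singletonE)
    then show ?thesis using W1[of a] by simp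
  next
    case 3
    then obtain v where vA: "v \<in> A" by fastforce
    have c1: "card (A - {v}) = Suc n" using 3 vA less.prems by simp
    have IH1: "W (A - {v}) \<le> fr x (Suc n)"
      using less.hyps[of "A - {v}"] c1 3 less.prems by simp
    have IH2: "W (A - {v,j}) \<le> fr x n" if "j \<in> A - {v}" for j
    proof -
      have "card (A - {v,j}) = n" using c1 that less.prems
        by (metis Diff_insert2 card_Diff_singleton diff_Suc_1 finite_Diff insert_Diff_single insert_absorb insert_iff)
      then show ?thesis using less.hyps[of "A - {v,j}"] 3 less.prems by simp
    qed
    have "W A \<le> (\<Sum>j\<in>A-{v}. W (A-{v}) + x * W (A-{v,j}))" using rec less.prems vA by blast
    also have "\<dots> \<le> (\<Sum>j\<in>A-{v}. fr x (Suc n) + x * fr x n)"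
    proof (rule sum_mono)
      fix j assume "j \<in> A - {v}"
      then show "W (A-{v}) + x * W (A-{v,j}) \<le> fr x (Suc n) + x * fr x n"
        using IH1 IH2 x by (simp add: add_mono mult_left_mono)
    qed
    also have "\<dots> = fr x (card A)" using c1 3 by simp
    finally show ?thesis .
  qed
qed

lemma Dsum_bound:
  assumes "0 \<le> x" "finite A" shows "Dsum x A \<le> fr x (card A)"
proof (rule rec_bound[OF assms(1) _ _ _ assms(2)])
  have "der {} = {id}" by (auto simp: der_def)
  then show "Dsum x {} \<le> 1" by (simp add: Dsum_def cyn_def)
  show "Dsum x {a} \<le> 0" for a
  proof -
    have "der {a} = {}" by (auto simp: der_def)
    then show ?thesis by (simp add: Dsum_def)
  qed
  show "Dsum x A \<le> (\<Sum>j\<in>A-{v}. Dsum x (A-{v}) + x * Dsum x (A-{v,j}))" if "finite A" "v \<in> A" for A v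
    using Dsum_rec[OF that assms(1)] .
qed



definition parts :: "nat set \<Rightarrow> nat set set set" where
  "parts A = {P. partition_on A P \<and> (\<forall>B\<in>P. 2 \<le> card B)}"
definition Qsum :: "real \<Rightarrow> nat set \<Rightarrow> real" where
  "Qsum x A = (\<Sum>P\<in>parts A. x ^ card P)"

lemma pblock_eq: "partition_on A P \<Longrightarrow> B1 \<in> P \<Longrightarrow> B2 \<in> P \<Longrightarrow> z \<in> B1 \<Longrightarrow> z \<in> B2 \<Longrightarrow> B1 = B2"
  unfolding partition_on_def disjoint_def by blast

lemma finite_parts: "finite A \<Longrightarrow> finite (parts A)"
proof (rule finite_subset[of _ "Pow (Pow A)"])
  show "parts A \<subseteq> Pow (Pow A)" by (auto simp: parts_def partition_on_def)
qed simp

lemma card2_fin: "2 \<le> card B \<Longrightarrow> finite B"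
  using card.infinite by fastforce

lemma Qsum_rec:
  assumes fin: "finite A" and vA: "v \<in> A" and x: "0 \<le> x"
  shows "Qsum x A \<le> (\<Sum>j\<in>A-{v}. Qsum x (A-{v}) + x * Qsum x (A-{v,j}))"
proof -
  define bl where "bl P = (THE B. B \<in> P \<and> v \<in> B)" for P :: "nat set set"
  define jj where "jj P = Min (bl P - {v})" for P
  have blk: "bl P \<in> P \<and> v \<in> bl P \<and> (\<forall>B\<in>P. v \<in> B \<longrightarrow> B = bl P)" if "P \<in> parts A" for P
  proof -
    have pp: "partition_on A P" using that by (simp add: parts_def)
    then have "v \<in> \<Union>P" using vA partition_onD1 by blast
    then obtain B where B: "B \<in> P" "v \<in> B" by blast
    have "bl P = B" unfolding bl_def
    proof (rule the_equality)
      show "B \<in> P \<and> v \<in> B" using B by simp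
      fix C assume "C \<in> P \<and> v \<in> C" then show "C = B" using pblock_eq[OF pp] B by blast
    qed
    then show ?thesis using B pblock_eq[OF pp] by blast
  qed
  have jjp: "jj P \<in> bl P - {v} \<and> finite (bl P) \<and> 2 \<le> card (bl P)" if "P \<in> parts A" for P
  proof -
    have c: "2 \<le> card (bl P)" using blk[OF that] that by (auto simp: parts_def)
    have f: "finite (bl P)" using card2_fin[OF c] .
    have "card (bl P - {v}) \<ge> 1" using c f blk[OF that] by simp
    then have "bl P - {v} \<noteq> {}" by (metis card.empty not_one_le_zero)
    then have "jj P \<in> bl P - {v}" unfolding jj_def using f by (intro Min_in) auto
    then show ?thesis using c f by simp
  qed
  define T1 where "T1 = {P\<in>parts A. card (bl P) = 2}"
  define T2 where "T2 = {P\<in>parts A. card (bl P) \<noteq> 2}"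
  have split: "Qsum x A = sum (\<lambda>P. x ^ card P) T1 + sum (\<lambda>P. x ^ card P) T2"
  proof -
    have "parts A = T1 \<union> T2" "T1 \<inter> T2 = {}" by (auto simp: T1_def T2_def)
    moreover have "finite T1" "finite T2" using finite_parts[OF fin] by (auto simp: T1_def T2_def)
    ultimately show ?thesis unfolding Qsum_def by (simp add: sum.union_disjoint)
  qed
  have part1: "sum (\<lambda>P. x ^ card P) T1 \<le> (\<Sum>j\<in>A-{v}. x * Qsum x (A-{v,j}))"
  proof -
    define u1 where "u1 = (\<lambda>(j::nat, Q::nat set set). x * x ^ card Q)"
    define \<Psi> where "\<Psi> P = (jj P, P - {bl P})" for P
    have blT1: "bl P = {v, jj P}" if "P \<in> T1" for P
    proof -
      have P: "P \<in> parts A" using that by (simp add: T1_def)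
      have "{v, jj P} \<subseteq> bl P" using blk[OF P] jjp[OF P] by auto
      moreover have "card {v, jj P} = card (bl P)" using jjp[OF P] that by (auto simp: T1_def)
      ultimately show ?thesis using jjp[OF P] by (metis card_subset_eq)
    qed
    have "sum (\<lambda>P. x ^ card P) T1 \<le> sum u1 (Sigma (A-{v}) (\<lambda>j. parts (A-{v,j})))"
    proof (rule sum_inj_le)
      show "finite (Sigma (A-{v}) (\<lambda>j. parts (A-{v,j})))"
        using fin finite_parts by (intro finite_SigmaI) auto
      show "0 \<le> u1 t" for t using x by (auto simp: u1_def split: prod.splits)
      show "inj_on \<Psi> T1"
      proof (rule inj_onI)
        fix P1 P2 assume P1: "P1 \<in> T1" and P2: "P2 \<in> T1" and e: "\<Psi> P1 = \<Psi> P2"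
        then have e1: "jj P1 = jj P2" and e2: "P1 - {bl P1} = P2 - {bl P2}" by (auto simp: \<Psi>_def)
        have e3: "bl P1 = bl P2" using blT1[OF P1] blT1[OF P2] e1 by simp
        have "P1 = insert (bl P1) (P1 - {bl P1})" using blk P1 by (auto simp: T1_def)
        also have "\<dots> = insert (bl P2) (P2 - {bl P2})" using e2 e3 by simp
        also have "\<dots> = P2" using blk P2 by (auto simp: T1_def)
        finally show "P1 = P2" .
      qed
      show "\<Psi> ` T1 \<subseteq> Sigma (A-{v}) (\<lambda>j. parts (A-{v,j}))"
      proof
        fix p assume "p \<in> \<Psi> ` T1"
        then obtain P where P1: "P \<in> T1" and p: "p = \<Psi> P" by blast
        have P: "P \<in> parts A" using P1 by (simp add: T1_def)
        have pp: "partition_on A P" using P by (simp add: parts_def)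
        define B where "B = bl P"
        have B: "B \<in> P" "B = {v, jj P}" using blk[OF P] blT1[OF P1] by (auto simp: B_def)
        have jA: "jj P \<in> A - {v}" using jjp[OF P] blk[OF P] partition_onD1[OF pp] by auto
        have "partition_on (A - {v, jj P}) (P - {B})"
        proof (rule partition_onI)
          show "\<Union>(P - {B}) = A - {v, jj P}"
          proof (rule set_eqI, rule iffI)
            fix z assume "z \<in> \<Union>(P - {B})"
            then obtain C where C: "C \<in> P" "C \<noteq> B" "z \<in> C" by blast
            have "z \<in> A" using C partition_onD1[OF pp] by blast
            moreover have "z \<notin> B" using pblock_eq[OF pp C(1) B(1) C(3)] C(2) by blast
            ultimately show "z \<in> A - {v, jj P}" using B(2) by blast
          next
            fix z assume z: "z \<in> A - {v, jj P}"
            then have "z \<in> \<Union>P" using partition_onD1[OF pp] by blast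
            then obtain C where C: "C \<in> P" "z \<in> C" by blast
            have "C \<noteq> B" using B(2) z C by blast
            then show "z \<in> \<Union>(P - {B})" using C by blast
          qed
          show "disjnt p q" if "p \<in> P - {B}" "q \<in> P - {B}" "p \<noteq> q" for p q
            using that partition_onD2[OF pp] unfolding disjoint_def disjnt_def by blast
          show "{} \<notin> P - {B}" using partition_onD3[OF pp] by blast
        qed
        moreover have "\<forall>C\<in>P - {B}. 2 \<le> card C" using P by (simp add: parts_def)
        ultimately show "p \<in> Sigma (A-{v}) (\<lambda>j. parts (A-{v,j}))"
          using jA by (simp add: p \<Psi>_def B_def[symmetric] parts_def)
      qed
      fix P assume P1: "P \<in> T1"
      have P: "P \<in> parts A" using P1 by (simp add: T1_def)
      have "finite P" using finite_elements[OF fin] P by (simp add: parts_def)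
      then have "card P = Suc (card (P - {bl P}))" using blk[OF P] card_Suc_Diff1 by metis
      then show "x ^ card P = u1 (\<Psi> P)" by (simp add: u1_def \<Psi>_def)
    qed
    also have "\<dots> = (\<Sum>j\<in>A-{v}. \<Sum>Q\<in>parts (A-{v,j}). x * x ^ card Q)"
      unfolding u1_def using fin finite_parts by (subst sum.Sigma) auto
    also have "\<dots> = (\<Sum>j\<in>A-{v}. x * Qsum x (A-{v,j}))"
      by (simp add: Qsum_def sum_distrib_left)
    finally show ?thesis .
  qed
  have part2: "sum (\<lambda>P. x ^ card P) T2 \<le> (\<Sum>j\<in>A-{v}. Qsum x (A-{v}))"
  proof -
    define u2 where "u2 = (\<lambda>(j::nat, Q::nat set set). x ^ card Q)"
    define \<Psi> where "\<Psi> P = (jj P, (\<lambda>C. C - {v}) ` P)" for P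
    define g where "g P D = (if jj P \<in> D then insert v D else D)" for P D
    have ginv: "g P (C - {v}) = C" if P2: "P \<in> T2" and C: "C \<in> P" for P C
    proof -
      have P: "P \<in> parts A" using P2 by (simp add: T2_def)
      have pp: "partition_on A P" using P by (simp add: parts_def)
      show ?thesis
      proof (cases "C = bl P")
        case True
        then show ?thesis using jjp[OF P] blk[OF P] by (auto simp: g_def)
      next
        case False
        have "v \<notin> C" using blk[OF P] C False by blast
        moreover have "jj P \<notin> C"
        proof
          assume "jj P \<in> C"
          then have "C = bl P" using pblock_eq[OF pp C, of "bl P" "jj P"] blk[OF P] jjp[OF P] by blast
          then show False using False by simp
        qed
        ultimately show ?thesis by (simp add: g_def)
      qed
    qed
    have recov: "P = g P ` ((\<lambda>C. C - {v}) ` P)" if "P \<in> T2" for P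
    proof -
      have "g P ` ((\<lambda>C. C - {v}) ` P) = (\<lambda>C. g P (C - {v})) ` P" by (simp add: image_comp o_def)
      also have "\<dots> = (\<lambda>C. C) ` P" by (rule image_cong) (use ginv that in auto)
      finally show ?thesis by simp
    qed
    have "sum (\<lambda>P. x ^ card P) T2 \<le> sum u2 (Sigma (A-{v}) (\<lambda>j. parts (A-{v})))"
    proof (rule sum_inj_le)
      show "finite (Sigma (A-{v}) (\<lambda>j. parts (A-{v})))"
        using fin finite_parts by (intro finite_SigmaI) auto
      show "0 \<le> u2 t" for t using x by (auto simp: u2_def split: prod.splits)
      show "inj_on \<Psi> T2"
      proof (rule inj_onI)
        fix P1 P2 assume P1: "P1 \<in> T2" and P2: "P2 \<in> T2" and e: "\<Psi> P1 = \<Psi> P2"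
        then have e1: "jj P1 = jj P2" and e2: "(\<lambda>C. C - {v}) ` P1 = (\<lambda>C. C - {v}) ` P2"
          by (auto simp: \<Psi>_def)
        have "g P1 = g P2" using e1 by (simp add: g_def fun_eq_iff)
        then show "P1 = P2" using recov[OF P1] recov[OF P2] e2 by metis
      qed
      have inj2: "inj_on (\<lambda>C. C - {v}) P" if P: "P \<in> parts A" for P
      proof (rule inj_onI)
        have pp: "partition_on A P" using P by (simp add: parts_def)
        fix C1 C2 assume C1: "C1 \<in> P" and C2: "C2 \<in> P" and e: "C1 - {v} = C2 - {v}"
        have "2 \<le> card C1" using C1 P by (simp add: parts_def)
        then have "card (C1 - {v}) \<ge> 1" by (auto simp: card_Diff_singleton_if)
        then obtain z where "z \<in> C1 - {v}" by (metis card.empty ex_in_conv not_one_le_zero)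
        then show "C1 = C2" using pblock_eq[OF pp C1 C2, of z] e by blast
      qed
      show "\<Psi> ` T2 \<subseteq> Sigma (A-{v}) (\<lambda>j. parts (A-{v}))"
      proof
        fix p assume "p \<in> \<Psi> ` T2"
        then obtain P where P2: "P \<in> T2" and p: "p = \<Psi> P" by blast
        have P: "P \<in> parts A" using P2 by (simp add: T2_def)
        have pp: "partition_on A P" using P by (simp add: parts_def)
        have jA: "jj P \<in> A - {v}" using jjp[OF P] blk[OF P] partition_onD1[OF pp] by auto
        have cards: "2 \<le> card (C - {v})" if C: "C \<in> P" for C
        proof (cases "v \<in> C")
          case True
          then have "C = bl P" using blk[OF P] C by blast
          then have "3 \<le> card C" using jjp[OF P] P2 by (simp add: T2_def)
          moreover have "finite C" using calculation by (intro card2_fin) simp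
          ultimately show ?thesis using True by simp
        next
          case False then show ?thesis using C P by (simp add: parts_def)
        qed
        have "partition_on (A - {v}) ((\<lambda>C. C - {v}) ` P)"
        proof (rule partition_onI)
          show "\<Union>((\<lambda>C. C - {v}) ` P) = A - {v}" using partition_onD1[OF pp] by blast
          show "disjnt p q" if a1: "p \<in> (\<lambda>C. C - {v}) ` P" and a2: "q \<in> (\<lambda>C. C - {v}) ` P" and a3: "p \<noteq> q" for p q
          proof -
            obtain C1 where C1: "C1 \<in> P" "p = C1 - {v}" using a1 by blast
            obtain C2 where C2: "C2 \<in> P" "q = C2 - {v}" using a2 by blast
            have "C1 \<noteq> C2" using C1 C2 a3 by blast
            then have "C1 \<inter> C2 = {}" using partition_onD2[OF pp] C1 C2 unfolding disjoint_def by blast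
            then show ?thesis using C1 C2 by (auto simp: disjnt_def)
          qed
          show "{} \<notin> (\<lambda>C. C - {v}) ` P"
          proof
            assume "{} \<in> (\<lambda>C. C - {v}) ` P"
            then obtain C where C: "C \<in> P" "C - {v} = {}" by blast
            have "2 \<le> card (C - {v})" using cards[OF C(1)] .
            then show False unfolding C(2) by simp
          qed
        qed
        moreover have "\<forall>D\<in>(\<lambda>C. C - {v}) ` P. 2 \<le> card D" using cards by blast
        ultimately show "p \<in> Sigma (A-{v}) (\<lambda>j. parts (A-{v}))"
          using jA by (simp add: p \<Psi>_def parts_def)
      qed
      fix P assume P2: "P \<in> T2"
      have P: "P \<in> parts A" using P2 by (simp add: T2_def)
      have "card ((\<lambda>C. C - {v}) ` P) = card P" using card_image[OF inj2[OF P]] .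
      then show "x ^ card P = u2 (\<Psi> P)" by (simp add: u2_def \<Psi>_def)
    qed
    also have "\<dots> = (\<Sum>j\<in>A-{v}. \<Sum>Q\<in>parts (A-{v}). x ^ card Q)"
      unfolding u2_def using fin finite_parts by (subst sum.Sigma) auto
    also have "\<dots> = (\<Sum>j\<in>A-{v}. Qsum x (A-{v}))"
      by (simp add: Qsum_def)
    finally show ?thesis .
  qed
  show ?thesis using split part1 part2 by (simp add: sum.distrib)
qed



lemma Qsum_bound:
  assumes "0 \<le> x" "finite A" shows "Qsum x A \<le> fr x (card A)"
proof (rule rec_bound[OF assms(1) _ _ _ assms(2)])
  have "parts {} = {{}}" by (auto simp: parts_def partition_on_empty)
  then show "Qsum x {} \<le> 1" by (simp add: Qsum_def)
  show "Qsum x {a} \<le> 0" for a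
  proof -
    have "parts {a} = {}"
    proof (rule ccontr)
      assume "parts {a} \<noteq> {}"
      then obtain P where P: "partition_on {a} P" "\<forall>B\<in>P. 2 \<le> card B" by (auto simp: parts_def)
      have "a \<in> \<Union>P" using partition_onD1[OF P(1)] by auto
      then obtain B where B: "B \<in> P" "a \<in> B" by blast
      have "B \<subseteq> {a}" using partition_onD1[OF P(1)] B(1) by blast
      then have "card B \<le> 1" using card_mono[of "{a}" B] by simp
      then show False using P(2) B(1) by fastforce
    qed
    then show ?thesis by (simp add: Qsum_def)
  qed
  show "Qsum x A \<le> (\<Sum>j\<in>A-{v}. Qsum x (A-{v}) + x * Qsum x (A-{v,j}))" if "finite A" "v \<in> A" for A v
    using Qsum_rec[OF that assms(1)] .
qed

lemma dfact_pos: "0 < dfact n"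
  by (induction n rule: dfact.induct) auto

lemma dfact_sq:
  "real (dfact (Suc n))^2 \<le> 2 * (real n + 1) * real (dfact n)^2 \<and>
   (real n + 2) * real (dfact n)^2 \<le> 2 * real (dfact (Suc n))^2"
proof (induction n)
  case 0 then show ?case by simp
next
  case (Suc n)
  define a where "a = real (dfact n)"
  define b where "b = real (dfact (Suc n))"
  have c: "real (dfact (Suc (Suc n))) = (real n + 2) * a" by (simp add: a_def algebra_simps)
  have IH1: "b^2 \<le> 2 * (real n + 1) * a^2" and IH2: "(real n + 2) * a^2 \<le> 2 * b^2"
    using Suc by (simp_all add: a_def b_def)
  have "((real n + 2) * a)^2 = (real n + 2) * ((real n + 2) * a^2)" by (simp add: power2_eq_square)
  also have "\<dots> \<le> (real n + 2) * (2 * b^2)" using IH2 by (intro mult_left_mono) auto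
  finally have g1: "((real n + 2) * a)^2 \<le> 2 * (real (Suc n) + 1) * b^2" by (simp add: algebra_simps)
  have "(real n + 3) * b^2 \<le> (real n + 3) * (2 * (real n + 1) * a^2)" using IH1 by (intro mult_left_mono) auto
  also have "\<dots> \<le> 2 * ((real n + 2) * a)^2"
  proof -
    have "(real n + 3) * (2 * (real n + 1)) \<le> 2 * (real n + 2)^2" by (simp add: power2_eq_square algebra_simps)
    then have "(real n + 3) * (2 * (real n + 1)) * a^2 \<le> 2 * (real n + 2)^2 * a^2" by (intro mult_right_mono) auto
    moreover have "2 * ((real n + 2) * a)^2 = 2 * (real n + 2)^2 * a^2" by (simp add: power_mult_distrib)
    ultimately show ?thesis by (simp add: algebra_simps)
  qed
  finally have g2: "(real (Suc n) + 2) * b^2 \<le> 2 * ((real n + 2) * a)^2" by (simp add: algebra_simps)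
  show ?case using g1 g2 c by (simp add: b_def)
qed

lemma fr_bound:
  fixes t y :: real
  assumes t1: "1 \<le> t" and y: "4 * t^3 \<le> y" and n: "real n \<le> t^4"
  shows "k \<le> n \<Longrightarrow> fr (y^2) k \<le> real (dfact k) * exp (1/t)^k * y^k"
proof (induction k rule: less_induct)
  case (less k)
  have ypos: "0 < y" using y t1 by (smt (verit) one_le_power)
  define \<beta> where "\<beta> = exp (1/t)"
  have bpos: "0 < \<beta>" by (simp add: \<beta>_def)
  consider "k = 0" | "k = 1" | m where "k = Suc (Suc m)" by (metis One_nat_def not0_implies_Suc)
  then show ?case
  proof cases
    case 1 then show ?thesis by simp
  next
    case 2 then show ?thesis using ypos bpos by (simp add: \<beta>_def)
  next
    case 3
    have l1: "m < k" "m \<le> n" "Suc m < k" "Suc m \<le> n" using less.prems 3 by auto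
    have IHm: "fr (y^2) m \<le> real (dfact m) * \<beta>^m * y^m" using less.IH[OF l1(1,2)] by (simp only: \<beta>_def)
    have IHm1: "fr (y^2) (Suc m) \<le> real (dfact (Suc m)) * \<beta>^(Suc m) * y^(Suc m)"
      using less.IH[OF l1(3,4)] by (simp only: \<beta>_def)
    define d where "d = real (dfact m)"
    define M where "M = d * \<beta>^m * y^m"
    have dpos: "0 < d" using dfact_pos by (simp add: d_def)
    have Mpos: "0 \<le> M" using dpos bpos ypos by (simp add: M_def)
    have mt: "real m + 1 \<le> t^4" using n less.prems 3 by simp
    have d1: "real (dfact (Suc m)) \<le> 2 * t^2 * d"
    proof -
      have "real (dfact (Suc m))^2 \<le> 2 * (real m + 1) * d^2" using dfact_sq[of m] by (simp add: d_def)
      also have "\<dots> \<le> 2 * t^4 * d^2" using mt by (intro mult_right_mono) auto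
      also have "\<dots> \<le> (2 * t^2 * d)^2"
      proof -
        have t4: "(t^2)^2 = t^4" by (simp flip: power_mult)
        have "(2 * t^2 * d)^2 = 4 * (t^4 * d^2)" by (simp add: power_mult_distrib t4)
        moreover have "0 \<le> t^4 * d^2" by simp
        ultimately show ?thesis by linarith
      qed
      finally have "real (dfact (Suc m))^2 \<le> (2 * t^2 * d)^2" .
      moreover have "0 \<le> 2 * t^2 * d" using dpos by simp
      ultimately show ?thesis by (rule power2_le_imp_le)
    qed
    have b2: "1 + 2/t \<le> \<beta>^2"
    proof -
      have "\<beta>^2 = exp (1/t + 1/t)" unfolding \<beta>_def power2_eq_square by (rule exp_add[symmetric])
      also have "1/t + 1/t = 2/t" by simp
      finally have "\<beta>^2 = exp (2/t)" .
      then show ?thesis using exp_ge_add_one_self[of "2/t"] by simp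
    qed
    have b3: "\<beta> \<le> 3"
    proof -
      have "1/t \<le> 1" using t1 by simp
      then have "\<beta> \<le> exp 1" by (simp add: \<beta>_def)
      then show ?thesis using exp_le by simp
    qed
    have key: "2 * t^2 * \<beta> \<le> (\<beta>^2 - 1) * y"
    proof -
      have "2 * t^2 * \<beta> \<le> 2 * t^2 * 3" using b3 t1 by (intro mult_left_mono) auto
      also have "\<dots> \<le> (2/t) * (4 * t^3)" using t1 by (simp add: power2_eq_square power3_eq_cube field_simps)
      also have "\<dots> \<le> (\<beta>^2 - 1) * y"
      proof (rule mult_mono)
        have "0 \<le> 2/t" using t1 by simp
        then show "2/t \<le> \<beta>^2 - 1" "0 \<le> \<beta>^2 - 1" using b2 by linarith+
        show "4 * t^3 \<le> y" using y .
        show "0 \<le> 4 * t^3" using t1 by simp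
      qed
      finally show ?thesis .
    qed
    have A: "real (dfact (Suc m)) * \<beta>^(Suc m) * y^(Suc m) \<le> M * ((\<beta>^2 - 1) * y^2)"
    proof -
      have "real (dfact (Suc m)) * \<beta>^(Suc m) * y^(Suc m) \<le> (2 * t^2 * d) * \<beta>^(Suc m) * y^(Suc m)"
        using d1 bpos ypos by (intro mult_right_mono) auto
      also have "\<dots> = M * (2 * t^2 * \<beta>) * y" by (simp add: M_def algebra_simps)
      also have "\<dots> \<le> M * ((\<beta>^2 - 1) * y) * y"
        using key Mpos ypos by (intro mult_right_mono mult_left_mono) auto
      also have "\<dots> = M * ((\<beta>^2 - 1) * y^2)" by (simp add: power2_eq_square algebra_simps)
      finally show ?thesis .
    qed
    have "fr (y^2) k = (real m + 1) * (fr (y^2) (Suc m) + y^2 * fr (y^2) m)" using 3 by simp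
    also have "\<dots> \<le> (real m + 1) * (M * ((\<beta>^2 - 1) * y^2) + y^2 * M)"
    proof -
      have "fr (y^2) (Suc m) \<le> M * ((\<beta>^2 - 1) * y^2)" using IHm1 A by linarith
      moreover have "y^2 * fr (y^2) m \<le> y^2 * M" using IHm by (intro mult_left_mono) (auto simp: M_def d_def)
      ultimately show ?thesis by (intro mult_left_mono) auto
    qed
    also have "\<dots> = (real m + 1) * (M * \<beta>^2 * y^2)" by (simp add: algebra_simps)
    also have "\<dots> \<le> (real m + 2) * (M * \<beta>^2 * y^2)" using Mpos by (intro mult_right_mono) auto
    also have "\<dots> = real (dfact k) * \<beta>^k * y^k" using 3 by (simp add: M_def d_def power2_eq_square algebra_simps)
    finally show ?thesis by (simp add: \<beta>_def)
  qed
qed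



theorem propositionD6:
  fixes l :: nat and x :: real
  assumes "l \<ge> 1" and "x \<ge> 16 * real l powr (3/2)"
  shows "(\<Sum>\<sigma> \<in> {\<sigma>. \<sigma> permutes {1..l} \<and> (\<forall>i\<in>{1..l}. \<sigma> i \<noteq> i)}.
            x ^ card (cycs l \<sigma>))
           \<le> exp (real l powr (3/4)) * real (dfact l) * x powr (real l / 2)
       \<and> (\<Sum>P \<in> {P. partition_on {1..l} P \<and> (\<forall>B\<in>P. card B \<ge> 2)}. x ^ card P)
           \<le> exp (real l powr (3/4)) * real (dfact l) * x powr (real l / 2)"
proof -
  define L where "L = real l"
  have L1: "1 \<le> L" using assms(1) by (simp add: L_def)
  define t where "t = L powr (1/4)"
  have t1: "1 \<le> t" unfolding t_def using L1 by (intro ge_one_powr_ge_zero) auto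
  have tpow: "t ^ n = L powr (real n / 4)" for n
    unfolding t_def using L1 by (subst powr_power) (auto simp: field_simps)
  have t4: "t^4 = L" using tpow[of 4] L1 by simp
  have t3: "t^3 = L powr (3/4)" using tpow[of 3] by simp
  have t6: "t^6 = L powr (3/2)" using tpow[of 6] by simp
  have "0 \<le> real l powr (3/2)" by simp
  then have x0: "0 \<le> x" using assms(2) by linarith
  define y where "y = sqrt x"
  have xy: "x = y^2" using x0 by (simp add: y_def)
  have y0: "0 \<le> y" using x0 by (simp add: y_def)
  have y4: "4 * t^3 \<le> y"
  proof -
    have "(4 * t^3)^2 = 16 * t^6" by (simp add: power_mult_distrib flip: power_mult)
    then have "(4 * t^3)^2 \<le> y^2" using assms(2) t6 xy by (simp add: L_def)
    then show ?thesis using y0 by (rule power2_le_imp_le)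
  qed
  have "1 \<le> t^3" using t1 by (simp add: one_le_power)
  then have ypos: "0 < y" using y4 by linarith
  have lt: "real l \<le> t^4" using t4 by (simp add: L_def)
  have "fr (y^2) l \<le> real (dfact l) * exp (1/t)^l * y^l" using fr_bound[OF t1 y4 lt, of l] by simp
  then have fb: "fr x l \<le> real (dfact l) * exp (1/t)^l * y^l" using xy by simp
  have e1: "exp (1/t)^l = exp (L powr (3/4))"
  proof -
    have "exp (1/t)^l = exp (L * (1/t))" by (simp add: exp_of_nat_mult[symmetric] L_def)
    also have "L * (1/t) = t^3"
    proof -
      have "t^4 = t^3 * t" by (simp add: power3_eq_cube power4_eq_xxxx)
      then show ?thesis using t4 t1 by (simp add: field_simps)
    qed
    finally show ?thesis using t3 by simp
  qed
  have e2: "y^l = x powr (real l / 2)"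
  proof -
    have "x powr (real l / 2) = (y powr 2) powr (real l / 2)" using xy y0 by simp
    also have "\<dots> = y powr (2 * (real l / 2))" by (rule powr_powr)
    also have "\<dots> = y powr (real l)" by simp
    also have "\<dots> = y^l" using ypos by (simp add: powr_realpow)
    finally show ?thesis by simp
  qed
  have bound: "fr x l \<le> exp (real l powr (3/4)) * real (dfact l) * x powr (real l / 2)"
  proof -
    have "real (dfact l) * exp (1/t)^l * y^l = exp (real l powr (3/4)) * real (dfact l) * x powr (real l / 2)"
      unfolding e1 e2 L_def by (simp only: mult_ac)
    then show ?thesis using fb by linarith
  qed
  have S1: "(\<Sum>\<sigma> \<in> {\<sigma>. \<sigma> permutes {1..l} \<and> (\<forall>i\<in>{1..l}. \<sigma> i \<noteq> i)}. x ^ card (cycs l \<sigma>)) = Dsum x {1..l}"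
    unfolding Dsum_def der_def cyn_def cycs_def by (rule refl)
  have S2: "(\<Sum>P \<in> {P. partition_on {1..l} P \<and> (\<forall>B\<in>P. card B \<ge> 2)}. x ^ card P) = Qsum x {1..l}"
    unfolding Qsum_def parts_def by (rule refl)
  have "Dsum x {1..l} \<le> fr x l" using Dsum_bound[OF x0, of "{1..l}"] by simp
  moreover have "Qsum x {1..l} \<le> fr x l" using Qsum_bound[OF x0, of "{1..l}"] by simp
  ultimately show ?thesis unfolding S1 S2 using bound by linarith
qed

end
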